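(* Let $\sigma$ be an $\mathcal{L}^S(C^* )$-sentence with parameters from $M$, and let $c_{i_1j_1},\dots,c_{i_nj_n}$ be all constant symbols from $C^*$ occurring in $\sigma$, listed in strictly increasing (lexicographic) order. Let $r,s$ be positive integers with $i_n\le s$ and $j_1,\dots,j_n\le r$, and let $\kappa_1,\dots,\kappa_s$ be infinite cardinals. Suppose there are ordinals $\beta_1<\dots<\beta_s<\theta$ and sets $X_k\subseteq F^{-1}(\beta_k)$ with $|X_k|=\kappa_k$ ($1\le k\le s$) such that for all $\mathbf{a}\in[X_1]^r\times\dots\times[X_s]^r$ we have $M\models\sigma(a_{i_1j_1},\dots,a_{i_nj_n})$. Then there are subsets $Y_k\subseteq X_k$ with $|Y_k|=\kappa_k$ ($1\le k\le s$) such that for all $\mathbf{a}\in[Y_1]^r\times\dots\times[Y_s]^r$ we have $M\models\sigma(a_{k_1l_1},\dots,a_{k_nl_n})$ whenever $\langle c_{i_1j_1},\dots,c_{i_nj_n}\rangle$ and $\langle c_{k_1l_1},\dots,c_{k_nl_n}\rangle$ are equivalent and $l_1,\dots,l_n\le r$.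
   Context: $\mathcal{L}$ is a countable first-order language containing a binary symbol $<$; $\mathcal{L}^S$ is $\mathcal{L}$ with Skolem function symbols added, $T_{\mathrm{skolem}}$ the theory saying they are Skolem functions. $\theta$ is a strongly inaccessible cardinal and $M$ is a model of $T_{\mathrm{skolem}}$ whose $\mathcal{L}$-reduct is a $\theta$-like model (cardinality $\theta$, every proper initial segment of cardinality $<\theta$) of a complete $\mathcal{L}$-theory $T$ in which $<$ is a linear order. Fix a chain $\langle M_i;i<\theta\rangle$ of $\mathcal{L}^S$-elementary submodels of $M$, each a proper initial segment of $M$, with $M_j$ an elementary end extension of $M_i$ for $i<j$, $M_\delta=\bigcup_{i<\delta}M_i$ for limit $\delta<\theta$, and $M=\bigcup_{i<\theta}M_i$ (obtained by a Skolem hull argument). $F:M\to\theta$ sends $a$ to the least $i$ with $a\in M_i$. $C^*=\{c_{ij}\mid i,j<\omega\}$ are new constants. For $X\subseteq M$, $[X]^r$ is the set of strictly increasing $r$-sequences from $X$; an element $\mathbf{a}\in[X_1]^r\times\dots\times[X_s]^r$ is written $\mathbf{a}=\langle\langle a_{11},\dots,a_{1r}\rangle,\dots,\langle a_{s1},\dots,a_{sr}\rangle\rangle$. $\sigma(a_{k_1l_1},\dots,a_{k_nl_n})$ denotes the result of replacing each $c_{i_pj_p}$ in $\sigma$ by $a_{k_pl_p}$. Two strictly increasing sequences $\langle c_{i_1j_1},\dots,c_{i_nj_n}\rangle$, $\langle c_{k_1l_1},\dots,c_{k_nl_n}\rangle$ are equivalent iff $i_p=k_p$ for $p=1,\dots,n$.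 *)

theory Defs
  imports Main "HOL-Library.Countable_Set"
begin

text \<open>Terms over function symbols 'f (the symbols of L^S, Skolem symbols included),
  with variables, parameters from the model (elements of type 'm), and the new
  constants c_ij of C* (CC i j).\<close>

datatype ('f, 'm) trm =
    Var nat
  | Par 'm
  | CC nat nat
  | App 'f "('f, 'm) trm list"

datatype ('f, 'p, 'm) fm =
    FF
  | Eq "('f, 'm) trm" "('f, 'm) trm"
  | Rel 'p "('f, 'm) trm list"
  | Neg "('f, 'p, 'm) fm"
  | Conj "('f, 'p, 'm) fm" "('f, 'p, 'm) fm"
  | Ex nat "('f, 'p, 'm) fm"

fun eval :: "('f \<Rightarrow> 'm list \<Rightarrow> 'm) \<Rightarrow> (nat \<Rightarrow> 'm) \<Rightarrow> ('f, 'm) trm \<Rightarrow> 'm" where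
  "eval fs e (Var x) = e x"
| "eval fs e (Par a) = a"
| "eval fs e (CC i j) = undefined"
| "eval fs e (App f ts) = fs f (map (eval fs e) ts)"

fun sat :: "'m set \<Rightarrow> ('f \<Rightarrow> 'm list \<Rightarrow> 'm) \<Rightarrow> ('p \<Rightarrow> 'm list \<Rightarrow> bool)
            \<Rightarrow> (nat \<Rightarrow> 'm) \<Rightarrow> ('f, 'p, 'm) fm \<Rightarrow> bool" where
  "sat D fs rs e FF = False"
| "sat D fs rs e (Eq t u) = (eval fs e t = eval fs e u)"
| "sat D fs rs e (Rel p ts) = rs p (map (eval fs e) ts)"
| "sat D fs rs e (Neg \<phi>) = (\<not> sat D fs rs e \<phi>)"
| "sat D fs rs e (Conj \<phi> \<psi>) = (sat D fs rs e \<phi> \<and> sat D fs rs e \<psi>)"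
| "sat D fs rs e (Ex x \<phi>) = (\<exists>a\<in>D. sat D fs rs (e(x := a)) \<phi>)"

fun trm_vars :: "('f, 'm) trm \<Rightarrow> nat set" where
  "trm_vars (Var x) = {x}"
| "trm_vars (Par a) = {}"
| "trm_vars (CC i j) = {}"
| "trm_vars (App f ts) = (\<Union>t\<in>set ts. trm_vars t)"

fun fv :: "('f, 'p, 'm) fm \<Rightarrow> nat set" where
  "fv FF = {}"
| "fv (Eq t u) = trm_vars t \<union> trm_vars u"
| "fv (Rel p ts) = (\<Union>t\<in>set ts. trm_vars t)"
| "fv (Neg \<phi>) = fv \<phi>"
| "fv (Conj \<phi> \<psi>) = fv \<phi> \<union> fv \<psi>"
| "fv (Ex x \<phi>) = fv \<phi> - {x}"

fun trm_cc :: "('f, 'm) trm \<Rightarrow> (nat \<times> nat) set" where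
  "trm_cc (Var x) = {}"
| "trm_cc (Par a) = {}"
| "trm_cc (CC i j) = {(i, j)}"
| "trm_cc (App f ts) = (\<Union>t\<in>set ts. trm_cc t)"

fun fm_cc :: "('f, 'p, 'm) fm \<Rightarrow> (nat \<times> nat) set" where
  "fm_cc FF = {}"
| "fm_cc (Eq t u) = trm_cc t \<union> trm_cc u"
| "fm_cc (Rel p ts) = (\<Union>t\<in>set ts. trm_cc t)"
| "fm_cc (Neg \<phi>) = fm_cc \<phi>"
| "fm_cc (Conj \<phi> \<psi>) = fm_cc \<phi> \<union> fm_cc \<psi>"
| "fm_cc (Ex x \<phi>) = fm_cc \<phi>"

fun trm_pars :: "('f, 'm) trm \<Rightarrow> 'm set" where
  "trm_pars (Var x) = {}"
| "trm_pars (Par a) = {a}"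
| "trm_pars (CC i j) = {}"
| "trm_pars (App f ts) = (\<Union>t\<in>set ts. trm_pars t)"

fun fm_pars :: "('f, 'p, 'm) fm \<Rightarrow> 'm set" where
  "fm_pars FF = {}"
| "fm_pars (Eq t u) = trm_pars t \<union> trm_pars u"
| "fm_pars (Rel p ts) = (\<Union>t\<in>set ts. trm_pars t)"
| "fm_pars (Neg \<phi>) = fm_pars \<phi>"
| "fm_pars (Conj \<phi> \<psi>) = fm_pars \<phi> \<union> fm_pars \<psi>"
| "fm_pars (Ex x \<phi>) = fm_pars \<phi>"

definition pure :: "('f, 'p, 'm) fm \<Rightarrow> bool" where
  "pure \<phi> \<longleftrightarrow> fm_pars \<phi> = {} \<and> fm_cc \<phi> = {}"

fun trm_subst :: "(nat \<times> nat \<Rightarrow> 'm) \<Rightarrow> ('f, 'm) trm \<Rightarrow> ('f, 'm) trm" where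
  "trm_subst g (Var x) = Var x"
| "trm_subst g (Par a) = Par a"
| "trm_subst g (CC i j) = Par (g (i, j))"
| "trm_subst g (App f ts) = App f (map (trm_subst g) ts)"

fun fm_subst :: "(nat \<times> nat \<Rightarrow> 'm) \<Rightarrow> ('f, 'p, 'm) fm \<Rightarrow> ('f, 'p, 'm) fm" where
  "fm_subst g FF = FF"
| "fm_subst g (Eq t u) = Eq (trm_subst g t) (trm_subst g u)"
| "fm_subst g (Rel p ts) = Rel p (map (trm_subst g) ts)"
| "fm_subst g (Neg \<phi>) = Neg (fm_subst g \<phi>)"
| "fm_subst g (Conj \<phi> \<psi>) = Conj (fm_subst g \<phi>) (fm_subst g \<psi>)"
| "fm_subst g (Ex x \<phi>) = Ex x (fm_subst g \<phi>)"

text \<open>sigma(b_1,...,b_n): the p-th listed constant cs!p is replaced by bs!p.\<close>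
definition inst :: "('f, 'p, 'm) fm \<Rightarrow> (nat \<times> nat) list \<Rightarrow> 'm list \<Rightarrow> ('f, 'p, 'm) fm" where
  "inst \<sigma> cs bs = fm_subst (\<lambda>ij. the (map_of (zip cs bs) ij)) \<sigma>"

text \<open>M |= phi for a sentence phi (universe of M = UNIV).\<close>
definition models :: "('f \<Rightarrow> 'm list \<Rightarrow> 'm) \<Rightarrow> ('p \<Rightarrow> 'm list \<Rightarrow> bool) \<Rightarrow> ('f, 'p, 'm) fm \<Rightarrow> bool" where
  "models fs rs \<phi> \<longleftrightarrow> sat UNIV fs rs (\<lambda>_. undefined) \<phi>"

definition lex_less :: "nat \<times> nat \<Rightarrow> nat \<times> nat \<Rightarrow> bool" where
  "lex_less p q \<longleftrightarrow> fst p < fst q \<or> (fst p = fst q \<and> snd p < snd q)"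

definition strict_linear :: "('m \<Rightarrow> 'm \<Rightarrow> bool) \<Rightarrow> bool" where
  "strict_linear lt \<longleftrightarrow> (\<forall>x. \<not> lt x x) \<and> (\<forall>x y z. lt x y \<longrightarrow> lt y z \<longrightarrow> lt x z)
      \<and> (\<forall>x y. lt x y \<or> x = y \<or> lt y x)"

definition initial_seg_of :: "('m \<Rightarrow> 'm \<Rightarrow> bool) \<Rightarrow> 'm set \<Rightarrow> 'm set \<Rightarrow> bool" where
  "initial_seg_of lt A B \<longleftrightarrow> A \<subseteq> B \<and> (\<forall>x\<in>B. \<forall>y\<in>A. lt x y \<longrightarrow> x \<in> A)"

definition elem_sub :: "('f \<Rightarrow> 'm list \<Rightarrow> 'm) \<Rightarrow> ('p \<Rightarrow> 'm list \<Rightarrow> bool) \<Rightarrow> 'm set \<Rightarrow> 'm set \<Rightarrow> bool" where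
  "elem_sub fs rs N N' \<longleftrightarrow> N \<noteq> {} \<and> N \<subseteq> N'
     \<and> (\<forall>f xs. set xs \<subseteq> N \<longrightarrow> fs f xs \<in> N)
     \<and> (\<forall>(\<phi> :: ('f, 'p, 'm) fm) e. pure \<phi> \<longrightarrow> range e \<subseteq> N \<longrightarrow>
            (sat N fs rs e \<phi> \<longleftrightarrow> sat N' fs rs e \<phi>))"

text \<open>The structure (universe UNIV) is a model of T_skolem: sk n phi is the Skolem
  function symbol (of arity n) for the L^S-formula phi(x_0; x_1..x_n).  The function
  symbols of L^S are those of L together with the Skolem symbols sk n phi.\<close>
definition skolem_model :: "('f \<Rightarrow> 'm list \<Rightarrow> 'm) \<Rightarrow> ('p \<Rightarrow> 'm list \<Rightarrow> bool)
      \<Rightarrow> (nat \<Rightarrow> ('f, 'p, 'm) fm \<Rightarrow> 'f) \<Rightarrow> bool" where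
  "skolem_model fs rs sk \<longleftrightarrow>
     (\<forall>n n' \<phi> \<phi>'. pure \<phi> \<longrightarrow> pure \<phi>' \<longrightarrow> fv \<phi> \<subseteq> {0..n} \<longrightarrow> fv \<phi>' \<subseteq> {0..n'} \<longrightarrow>
         sk n \<phi> = sk n' \<phi>' \<longrightarrow> n = n' \<and> \<phi> = \<phi>')
   \<and> (\<forall>n \<phi> e. pure \<phi> \<longrightarrow> fv \<phi> \<subseteq> {0..n} \<longrightarrow>
         (\<exists>a. sat UNIV fs rs (e(0 := a)) \<phi>) \<longrightarrow>
         sat UNIV fs rs (e(0 := fs (sk n \<phi>) (map e [1..<Suc n]))) \<phi>)"

text \<open>The ordinal theta is represented by the well-ordered type 'o (theta = its order
  type, the ordinals below theta being the elements of 'o).  theta is strongly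
  inaccessible: an uncountable regular strong limit cardinal.\<close>
definition strongly_inaccessible_type :: "'o::wellorder itself \<Rightarrow> bool" where
  "strongly_inaccessible_type _ \<longleftrightarrow>
     \<not> countable (UNIV :: 'o set)
   \<and> (\<forall>i::'o. ordLess2 (card_of {j. j < i}) (card_of (UNIV :: 'o set)))
   \<and> (\<forall>A::'o set. ordLess2 (card_of A) (card_of (UNIV :: 'o set)) \<longrightarrow> (\<exists>i. \<forall>a\<in>A. a < i))
   \<and> (\<forall>i::'o. ordLess2 (card_of (Pow {j. j < i})) (card_of (UNIV :: 'o set)))"

definition limit_ord :: "'o::wellorder \<Rightarrow> bool" where
  "limit_ord \<delta> \<longleftrightarrow> (\<exists>i. i < \<delta>) \<and> (\<forall>i < \<delta>. \<exists>j. i < j \<and> j < \<delta>)"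

text \<open>The standing setting: M (universe UNIV :: 'm set, functions fs, relations rs,
  the binary relation symbol lsym interpreting <) is a model of T_skolem whose L-reduct
  is a theta-like linear order; Mc is the chain of L^S-elementary submodels.\<close>
definition standing_setting ::
  "('f \<Rightarrow> 'm list \<Rightarrow> 'm) \<Rightarrow> ('p \<Rightarrow> 'm list \<Rightarrow> bool) \<Rightarrow> 'p
   \<Rightarrow> (nat \<Rightarrow> ('f, 'p, 'm) fm \<Rightarrow> 'f) \<Rightarrow> ('o::wellorder \<Rightarrow> 'm set) \<Rightarrow> bool" where
  "standing_setting fs rs lsym sk Mc \<longleftrightarrow>
     countable (UNIV :: 'f set) \<and> countable (UNIV :: 'p set)
   \<and> skolem_model fs rs sk
   \<and> strongly_inaccessible_type TYPE('o)
   \<and> strict_linear (\<lambda>x y. rs lsym [x, y])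
   \<and> ordIso2 (card_of (UNIV :: 'm set)) (card_of (UNIV :: 'o set))
   \<and> (\<forall>I. I \<noteq> UNIV \<longrightarrow> initial_seg_of (\<lambda>x y. rs lsym [x, y]) I UNIV \<longrightarrow>
          ordLess2 (card_of I) (card_of (UNIV :: 'o set)))
   \<and> (\<forall>i. elem_sub fs rs (Mc i) UNIV \<and> Mc i \<noteq> UNIV
          \<and> initial_seg_of (\<lambda>x y. rs lsym [x, y]) (Mc i) UNIV)
   \<and> (\<forall>i j. i < j \<longrightarrow> elem_sub fs rs (Mc i) (Mc j)
          \<and> initial_seg_of (\<lambda>x y. rs lsym [x, y]) (Mc i) (Mc j))
   \<and> (\<forall>\<delta>. limit_ord \<delta> \<longrightarrow> Mc \<delta> = (\<Union>i\<in>{i. i < \<delta>}. Mc i))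
   \<and> (\<Union>i. Mc i) = UNIV"

definition Fidx :: "('o::wellorder \<Rightarrow> 'm set) \<Rightarrow> 'm \<Rightarrow> 'o" where
  "Fidx Mc a = (LEAST i. a \<in> Mc i)"

text \<open>a in [X_1]^r x ... x [X_s]^r, with a k l = a_{kl} (1 \<le> k \<le> s, 1 \<le> l \<le> r).\<close>
definition in_prod :: "('m \<Rightarrow> 'm \<Rightarrow> bool) \<Rightarrow> nat \<Rightarrow> nat \<Rightarrow> (nat \<Rightarrow> 'm set) \<Rightarrow> (nat \<Rightarrow> nat \<Rightarrow> 'm) \<Rightarrow> bool" where
  "in_prod lt r s X a \<longleftrightarrow>
     (\<forall>k\<in>{1..s}. (\<forall>l\<in>{1..r}. a k l \<in> X k) \<and> (\<forall>l\<in>{1..r}. \<forall>l'\<in>{1..r}. l < l' \<longrightarrow> lt (a k l) (a k l')))"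

end

theory Submission imports Defs begin

definition ivl :: "('m\<Rightarrow>'m\<Rightarrow>bool) \<Rightarrow> 'm set \<Rightarrow> 'm option \<Rightarrow> 'm option \<Rightarrow> 'm set" where
 "ivl lt X lo hi = {x\<in>X. (\<forall>a. lo = Some a \<longrightarrow> lt a x) \<and> (\<forall>b. hi = Some b \<longrightarrow> lt x b)}"
definition room :: "('m\<Rightarrow>'m\<Rightarrow>bool) \<Rightarrow> 'm set \<Rightarrow> 'm option \<Rightarrow> 'm option \<Rightarrow> nat \<Rightarrow> bool" where
 "room lt X lo hi d \<longleftrightarrow> (\<exists>S. S \<subseteq> ivl lt X lo hi \<and> finite S \<and> card S = d)"
definition good :: "('m\<Rightarrow>'m\<Rightarrow>bool) \<Rightarrow> 'm set \<Rightarrow> 'm set \<Rightarrow> nat \<Rightarrow> bool" where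
 "good lt X Y r \<longleftrightarrow> Y \<subseteq> X \<and> (\<forall>y\<in>Y. room lt X None (Some y) r \<and> room lt X (Some y) None r)
   \<and> (\<forall>y\<in>Y. \<forall>y'\<in>Y. lt y y' \<longrightarrow> room lt X (Some y) (Some y') r)"

lemma room_mono: "room lt X lo hi d \<Longrightarrow> d' \<le> d \<Longrightarrow> room lt X lo hi d'"
  unfolding room_def by (metis obtain_subset_with_card_n order_trans)

lemma room_lo: assumes lin: "strict_linear lt" and "lt a b" and "room lt X (Some b) hi d"
  shows "room lt X (Some a) hi d"
proof -
  have "ivl lt X (Some b) hi \<subseteq> ivl lt X (Some a) hi"
    using assms unfolding ivl_def strict_linear_def by blast
  thus ?thesis using assms(3) unfolding room_def by blast
qed

lemma min_ex: assumes lin: "strict_linear lt" shows "finite S \<Longrightarrow> S \<noteq> {} \<Longrightarrow> \<exists>m\<in>S. \<forall>x\<in>S. x \<noteq> m \<longrightarrow> lt m x"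
proof (induction S rule: finite_ne_induct)
  case (singleton x) then show ?case by auto
next
  case (insert x F)
  then obtain m where m: "m\<in>F" "\<forall>y\<in>F. y \<noteq> m \<longrightarrow> lt m y" by blast
  show ?case
  proof (cases "lt x m")
    case True
    then show ?thesis using m lin insert.hyps unfolding strict_linear_def by (metis insert_iff)
  next
    case False
    then have "lt m x" using lin insert.hyps m unfolding strict_linear_def by metis
    then show ?thesis using m by auto
  qed
qed

lemma max_ex: assumes lin: "strict_linear lt" shows "finite S \<Longrightarrow> S \<noteq> {} \<Longrightarrow> \<exists>m\<in>S. \<forall>x\<in>S. x \<noteq> m \<longrightarrow> lt x m"
proof (induction S rule: finite_ne_induct)
  case (singleton x) then show ?case by auto
next
  case (insert x F)
  then obtain m where m: "m\<in>F" "\<forall>y\<in>F. y \<noteq> m \<longrightarrow> lt y m" by blast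
  show ?case
  proof (cases "lt m x")
    case True
    then show ?thesis using m lin insert.hyps unfolding strict_linear_def by (metis insert_iff)
  next
    case False
    then have "lt x m" using lin insert.hyps m unfolding strict_linear_def by metis
    then show ?thesis using m by auto
  qed
qed

lemma pick: assumes lin: "strict_linear lt" and "room lt X lo hi (Suc d)"
  shows "\<exists>v\<in>ivl lt X lo hi. room lt X (Some v) hi d"
proof -
  obtain S where S: "S \<subseteq> ivl lt X lo hi" "finite S" "card S = Suc d" using assms(2) room_def by metis
  then have "S \<noteq> {}" by auto
  then obtain m where m: "m\<in>S" "\<forall>x\<in>S. x \<noteq> m \<longrightarrow> lt m x" using min_ex[OF lin] S by blast
  have "S - {m} \<subseteq> ivl lt X (Some m) hi" using S m unfolding ivl_def by auto
  moreover have "card (S - {m}) = d" using S m by auto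
  ultimately show ?thesis using m S unfolding room_def by (metis finite_Diff subsetD)
qed

lemma good_sub: "good lt X Y r \<Longrightarrow> Y \<subseteq> X" unfolding good_def by simp
lemma good_below: "good lt X Y r \<Longrightarrow> y \<in> Y \<Longrightarrow> room lt X None (Some y) r" unfolding good_def by simp
lemma good_above: "good lt X Y r \<Longrightarrow> y \<in> Y \<Longrightarrow> room lt X (Some y) None r" unfolding good_def by simp
lemma good_between: "good lt X Y r \<Longrightarrow> y \<in> Y \<Longrightarrow> y' \<in> Y \<Longrightarrow> lt y y' \<Longrightarrow> room lt X (Some y) (Some y') r"
  unfolding good_def by simp


lemma good_intro: "Y \<subseteq> X \<Longrightarrow> (\<And>y. y\<in>Y \<Longrightarrow> room lt X None (Some y) r) \<Longrightarrow> (\<And>y. y\<in>Y \<Longrightarrow> room lt X (Some y) None r)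
  \<Longrightarrow> (\<And>y y'. y\<in>Y \<Longrightarrow> y'\<in>Y \<Longrightarrow> lt y y' \<Longrightarrow> room lt X (Some y) (Some y') r) \<Longrightarrow> good lt X Y r"
  unfolding good_def by blast

lemma fin_gen: assumes "\<And>S. S \<subseteq> A \<Longrightarrow> finite S \<Longrightarrow> card S = Suc r \<Longrightarrow> False" shows "finite A"
  using infinite_arbitrarily_large[of A "Suc r"] assms by blast

lemma fin1: assumes lin: "strict_linear lt" shows "finite {x\<in>X. \<not> room lt X None (Some x) r}"
proof (rule fin_gen)
  fix S assume S: "S \<subseteq> {x\<in>X. \<not> room lt X None (Some x) r}" "finite S" "card S = Suc r"
  then obtain m where m: "m\<in>S" "\<forall>x\<in>S. x \<noteq> m \<longrightarrow> lt x m" using max_ex[OF lin, of S] by force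
  have "S - {m} \<subseteq> ivl lt X None (Some m)" using S m unfolding ivl_def by auto
  moreover have "card (S - {m}) = r" using S m by auto
  moreover have "finite (S - {m})" using S by simp
  ultimately have "room lt X None (Some m) r" unfolding room_def by blast
  then show False using S m by auto
qed

lemma fin2: assumes lin: "strict_linear lt" shows "finite {x\<in>X. \<not> room lt X (Some x) None r}"
proof (rule fin_gen)
  fix S assume S: "S \<subseteq> {x\<in>X. \<not> room lt X (Some x) None r}" "finite S" "card S = Suc r"
  then obtain m where m: "m\<in>S" "\<forall>x\<in>S. x \<noteq> m \<longrightarrow> lt m x" using min_ex[OF lin, of S] by force
  have "S - {m} \<subseteq> ivl lt X (Some m) None" using S m unfolding ivl_def by auto
  moreover have "card (S - {m}) = r" using S m by auto
  moreover have "finite (S - {m})" using S by simp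
  ultimately have "room lt X (Some m) None r" unfolding room_def by blast
  then show False using S m by auto
qed

lemma fin3: assumes lin: "strict_linear lt" shows "finite {x\<in>X. lt x y \<and> \<not> room lt X (Some x) (Some y) r}"
proof (rule fin_gen)
  fix S assume S: "S \<subseteq> {x\<in>X. lt x y \<and> \<not> room lt X (Some x) (Some y) r}" "finite S" "card S = Suc r"
  then obtain m where m: "m\<in>S" "\<forall>x\<in>S. x \<noteq> m \<longrightarrow> lt m x" using min_ex[OF lin, of S] by force
  have "S - {m} \<subseteq> ivl lt X (Some m) (Some y)" using S m unfolding ivl_def by auto
  moreover have "card (S - {m}) = r" using S m by auto
  moreover have "finite (S - {m})" using S by simp
  ultimately have "room lt X (Some m) (Some y) r" unfolding room_def by blast
  then show False using S m by auto
qed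

lemma fin4: assumes lin: "strict_linear lt" shows "finite {x\<in>X. lt y x \<and> \<not> room lt X (Some y) (Some x) r}"
proof (rule fin_gen)
  fix S assume S: "S \<subseteq> {x\<in>X. lt y x \<and> \<not> room lt X (Some y) (Some x) r}" "finite S" "card S = Suc r"
  then obtain m where m: "m\<in>S" "\<forall>x\<in>S. x \<noteq> m \<longrightarrow> lt x m" using max_ex[OF lin, of S] by force
  have "S - {m} \<subseteq> ivl lt X (Some y) (Some m)" using S m unfolding ivl_def by auto
  moreover have "card (S - {m}) = r" using S m by auto
  moreover have "finite (S - {m})" using S by simp
  ultimately have "room lt X (Some y) (Some m) r" unfolding room_def by blast
  then show False using S m by auto
qed

lemma fin_le_inf: "finite A \<Longrightarrow> infinite B \<Longrightarrow> ordLeq2 (card_of A) (card_of B)"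
  using finite_ordLess_infinite[OF card_of_Well_order card_of_Well_order, of A B]
  by (simp add: Field_card_of ordLess_imp_ordLeq)

lemma exists_good: assumes lin: "strict_linear lt" and infX: "infinite X"
  shows "\<exists>Y. good lt X Y r \<and> ordIso2 (card_of Y) (card_of X)"
proof -
  let ?A = "{Y. good lt X Y r}"
  have zc: "\<forall>C\<in>chains ?A. \<Union>C \<in> ?A"
  proof
    fix C assume C: "C \<in> chains ?A"
    have C1: "C \<subseteq> ?A" and C2: "chain\<^sub>\<subseteq> C" using C unfolding chains_def by simp_all
    have CA: "\<And>Y. Y \<in> C \<Longrightarrow> good lt X Y r" using C1 by blast
    have ch: "\<And>Y Z. Y\<in>C \<Longrightarrow> Z\<in>C \<Longrightarrow> Y \<subseteq> Z \<or> Z \<subseteq> Y" using C2 unfolding chain_subset_def by blast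
    have "good lt X (\<Union>C) r"
    proof (rule good_intro)
      show "\<Union>C \<subseteq> X" using CA[THEN good_sub] by blast
      show "room lt X None (Some y) r" if "y \<in> \<Union>C" for y using that CA[THEN good_below] by blast
      show "room lt X (Some y) None r" if "y \<in> \<Union>C" for y using that CA[THEN good_above] by blast
      show "room lt X (Some y) (Some y') r" if yy: "y \<in> \<Union>C" "y' \<in> \<Union>C" "lt y y'" for y y'
      proof -
        obtain Y Z where "Y\<in>C" "Z\<in>C" "y\<in>Y" "y'\<in>Z" using yy(1,2) by blast
        then show ?thesis using ch[of Y Z] CA[THEN good_between] yy(3) by blast
      qed
    qed
    then show "\<Union>C \<in> ?A" by simp
  qed
  obtain M where M: "M \<in> ?A" and Mmax: "\<forall>Z\<in>?A. M \<subseteq> Z \<longrightarrow> Z = M" using Zorn_Lemma[OF zc] by blast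
  have gM: "good lt X M r" using M by simp
  define E where "E = {x\<in>X. \<not> room lt X None (Some x) r} \<union> {x\<in>X. \<not> room lt X (Some x) None r}"
  define N where "N y = {x\<in>X. lt x y \<and> \<not> room lt X (Some x) (Some y) r} \<union> {y} \<union> {x\<in>X. lt y x \<and> \<not> room lt X (Some y) (Some x) r}" for y
  have finE: "finite E" unfolding E_def using fin1[OF lin] fin2[OF lin] by simp
  have finN: "finite (N y)" for y unfolding N_def using fin3[OF lin] fin4[OF lin] by simp
  have cover: "X \<subseteq> E \<union> (\<Union>y\<in>M. N y)"
  proof
    fix x assume x: "x \<in> X"
    show "x \<in> E \<union> (\<Union>y\<in>M. N y)"
    proof (rule ccontr)
      assume nx: "x \<notin> E \<union> (\<Union>y\<in>M. N y)"
      have xM: "x \<notin> M" using nx unfolding N_def by blast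
      have g2: "good lt X (insert x M) r"
      proof (rule good_intro)
        show "insert x M \<subseteq> X" using x good_sub[OF gM] by blast
        show "room lt X None (Some y) r" if "y \<in> insert x M" for y
          using that nx x good_below[OF gM] unfolding E_def by blast
        show "room lt X (Some y) None r" if "y \<in> insert x M" for y
          using that nx x good_above[OF gM] unfolding E_def by blast
        show "room lt X (Some y) (Some y') r" if yy: "y \<in> insert x M" "y' \<in> insert x M" "lt y y'" for y y'
        proof -
          have irr: "\<not> lt x x" using lin unfolding strict_linear_def by blast
          consider "y = x" "y' \<in> M" | "y' = x" "y \<in> M" | "y \<in> M" "y' \<in> M" | "y = x" "y' = x" using yy(1,2) by blast
          then show ?thesis
          proof cases
            case 1 then show ?thesis using nx x yy(3) unfolding N_def by blast
          next
            case 2 then show ?thesis using nx x yy(3) unfolding N_def by blast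
          next
            case 3 then show ?thesis using good_between[OF gM] yy(3) by blast
          next
            case 4 then show ?thesis using irr yy(3) by blast
          qed
        qed
      qed
      then have "insert x M = M" using Mmax by blast
      then show False using xM by blast
    qed
  qed
  have Minf: "infinite M"
  proof
    assume "finite M"
    then have "finite (E \<union> (\<Union>y\<in>M. N y))" using finE finN by simp
    then show False using cover infX finite_subset by blast
  qed
  then have Mne: "M \<noteq> {}" by auto
  have "X \<subseteq> (\<Union>y\<in>M. N y \<union> E)" using cover Mne by blast
  then have "ordLeq2 (card_of X) (card_of (\<Union>y\<in>M. N y \<union> E))" by (rule card_of_mono1)
  moreover have "ordLeq2 (card_of (\<Union>y\<in>M. N y \<union> E)) (card_of M)"
  proof (rule card_of_UNION_ordLeq_infinite[OF Minf card_of_mono1[OF subset_refl]], rule ballI)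
    fix y assume "y \<in> M"
    have "finite (N y \<union> E)" using finE finN[of y] by simp
    then show "ordLeq2 (card_of (N y \<union> E)) (card_of M)" using fin_le_inf Minf by blast
  qed
  ultimately have "ordLeq2 (card_of X) (card_of M)" using ordLeq_transitive by blast
  moreover have "ordLeq2 (card_of M) (card_of X)" using card_of_mono1 good_sub[OF gM] by blast
  ultimately show ?thesis using gM ordIso_iff_ordLeq by blast
qed

lemma ext_aux:
  assumes lin: "strict_linear lt" and gd: "good lt X Y r" and infX: "infinite X"
    and P: "P \<subseteq> {1..r}" and gY: "\<forall>j\<in>P. g j \<in> Y"
    and gmono: "\<forall>j\<in>P. \<forall>j'\<in>P. j<j' \<longrightarrow> lt (g j) (g j')"
  shows "n \<le> r \<Longrightarrow> \<exists>f. (\<forall>j\<in>{1..n}. f j \<in> X) \<and> (\<forall>j\<in>{1..n}. \<forall>j'\<in>{1..n}. j<j' \<longrightarrow> lt (f j) (f j'))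
     \<and> (\<forall>j\<in>P. j \<le> n \<longrightarrow> f j = g j)
     \<and> room lt X (if n=0 then None else Some (f n)) None (r-n)
     \<and> (\<forall>q\<in>P. n<q \<longrightarrow> (\<forall>q'\<in>P. n<q' \<longrightarrow> q \<le> q') \<longrightarrow>
          room lt X (if n = 0 then None else Some (f n)) (Some (g q)) (q-n-1) \<and> (0<n \<longrightarrow> lt (f n) (g q)))"
proof (induction n)
  case 0
  obtain B where B: "finite B" "card B = r" "B \<subseteq> X" using infinite_arbitrarily_large[OF infX, of r] by blast
  have "ivl lt X None None = X" unfolding ivl_def by simp
  then have R: "room lt X None None r" using B unfolding room_def by blast
  have Q: "room lt X None (Some (g q)) (q-0-1)" if "q\<in>P" for q
  proof -
    have "room lt X None (Some (g q)) r" using good_below[OF gd] gY that by blast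
    moreover have "q - 0 - 1 \<le> r" using subsetD[OF P that] by auto
    ultimately show ?thesis using room_mono by blast
  qed
  have P0: "\<forall>j\<in>P. \<not> j \<le> 0" using P by auto
  show ?case apply (rule exI[of _ g]) using R Q P0 by simp
next
  case (Suc n)
  then obtain f where f1: "\<forall>j\<in>{1..n}. f j \<in> X" and f2: "\<forall>j\<in>{1..n}. \<forall>j'\<in>{1..n}. j<j' \<longrightarrow> lt (f j) (f j')"
     and f3: "\<forall>j\<in>P. j \<le> n \<longrightarrow> f j = g j"
     and f4: "room lt X (if n=0 then None else Some (f n)) None (r-n)"
     and f5: "\<forall>q\<in>P. n<q \<longrightarrow> (\<forall>q'\<in>P. n<q' \<longrightarrow> q \<le> q') \<longrightarrow>
          room lt X (if n = 0 then None else Some (f n)) (Some (g q)) (q-n-1) \<and> (0<n \<longrightarrow> lt (f n) (g q))"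
    by auto
  have YX: "Y \<subseteq> X" using good_sub[OF gd] .
  have trans: "\<And>x y z. lt x y \<Longrightarrow> lt y z \<Longrightarrow> lt x z" using lin unfolding strict_linear_def by blast
  show ?case
  proof (cases "Suc n \<in> P")
    case True
    define f' where "f' = f(Suc n := g (Suc n))"
    have lt1: "0<n \<longrightarrow> lt (f n) (g (Suc n))" using f5 True by auto
    have A: "\<forall>j\<in>{1..Suc n}. f' j \<in> X" using f1 YX gY True unfolding f'_def by auto
    have B: "\<forall>j\<in>{1..Suc n}. \<forall>j'\<in>{1..Suc n}. j<j' \<longrightarrow> lt (f' j) (f' j')"
    proof (intro ballI impI)
      fix j j' assume j: "j\<in>{1..Suc n}" "j'\<in>{1..Suc n}" "j<j'"
      show "lt (f' j) (f' j')"
      proof (cases "j' = Suc n")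
        case False then show ?thesis using f2 j unfolding f'_def by auto
      next
        case True
        then have "0 < n" "j \<le> n" using j by auto
        show ?thesis
        proof (cases "j = n")
          case True then show ?thesis using lt1 \<open>0<n\<close> \<open>j' = Suc n\<close> unfolding f'_def by auto
        next
          case False
          then have "lt (f j) (f n)" using f2 j \<open>j\<le>n\<close> \<open>0<n\<close> by auto
          then show ?thesis using trans[OF _ lt1[rule_format, OF \<open>0<n\<close>]] \<open>j' = Suc n\<close> \<open>j\<le>n\<close> unfolding f'_def by simp
        qed
      qed
    qed
    have C: "\<forall>j\<in>P. j \<le> Suc n \<longrightarrow> f' j = g j" using f3 unfolding f'_def by (auto simp: le_Suc_eq)
    have D: "room lt X (Some (f' (Suc n))) None (r - Suc n)"
      using good_above[OF gd] gY True room_mono[of lt X "Some (g (Suc n))" None r "r - Suc n"] unfolding f'_def by simp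
    have E: "room lt X (Some (f' (Suc n))) (Some (g q)) (q - Suc n - 1) \<and> lt (f' (Suc n)) (g q)"
      if "q\<in>P" "Suc n < q" for q
    proof -
      have l: "lt (g (Suc n)) (g q)" using gmono True that by auto
      have "room lt X (Some (g (Suc n))) (Some (g q)) r" using good_between[OF gd] gY True that l by blast
      moreover have "q - Suc n - 1 \<le> r" using subsetD[OF P that(1)] by auto
      ultimately show ?thesis using room_mono l unfolding f'_def by auto
    qed
    have D': "room lt X (if Suc n = 0 then None else Some (f' (Suc n))) None (r - Suc n)" using D by simp
    have E': "\<forall>q\<in>P. Suc n<q \<longrightarrow> (\<forall>q'\<in>P. Suc n<q' \<longrightarrow> q \<le> q') \<longrightarrow>
          room lt X (if Suc n = 0 then None else Some (f' (Suc n))) (Some (g q)) (q-Suc n-1) \<and> (0<Suc n \<longrightarrow> lt (f' (Suc n)) (g q))"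
      using E by simp
    show ?thesis using A B C D' E' by blast
  next
    case False
    let ?lo = "if n=0 then None else Some (f n)"
    show ?thesis
    proof (cases "\<exists>q\<in>P. n < q")
      case True
      define q0 where "q0 = (LEAST q. q\<in>P \<and> n < q)"
      have q0: "q0 \<in> P" "n < q0" using True LeastI_ex[of "\<lambda>q. q\<in>P \<and> n < q"] unfolding q0_def by auto
      have q0l: "\<forall>q'\<in>P. n<q' \<longrightarrow> q0 \<le> q'" unfolding q0_def by (auto intro: Least_le)
      have "Suc n < q0" using q0 False by (cases "q0 = Suc n") auto
      have eq: "q0 - n - 1 = Suc (q0 - Suc n - 1)" using \<open>Suc n < q0\<close> by simp
      have R0: "room lt X ?lo (Some (g q0)) (q0 - n - 1)"
        using f5 q0 q0l by blast
      have R: "room lt X ?lo (Some (g q0)) (Suc (q0 - Suc n - 1))" using R0 unfolding eq .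
      then obtain v where v: "v \<in> ivl lt X ?lo (Some (g q0))" "room lt X (Some v) (Some (g q0)) (q0 - Suc n - 1)"
        using pick[OF lin] by blast
      have vX: "v\<in>X" and vlo: "0<n \<longrightarrow> lt (f n) v" and vhi: "lt v (g q0)" using v(1) unfolding ivl_def by auto
      define f' where "f' = f(Suc n := v)"
      have A: "\<forall>j\<in>{1..Suc n}. f' j \<in> X" using f1 vX unfolding f'_def by auto
      have B: "\<forall>j\<in>{1..Suc n}. \<forall>j'\<in>{1..Suc n}. j<j' \<longrightarrow> lt (f' j) (f' j')"
      proof (intro ballI impI)
        fix j j' assume j: "j\<in>{1..Suc n}" "j'\<in>{1..Suc n}" "j<j'"
        show "lt (f' j) (f' j')"
        proof (cases "j' = Suc n")
          case False then show ?thesis using f2 j unfolding f'_def by auto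
        next
          case True
          then have "0 < n" "j \<le> n" using j by auto
          show ?thesis
          proof (cases "j = n")
            case True then show ?thesis using vlo \<open>0<n\<close> \<open>j' = Suc n\<close> unfolding f'_def by auto
          next
            case False
            then have "lt (f j) (f n)" using f2 j \<open>j\<le>n\<close> \<open>0<n\<close> by auto
            then show ?thesis using trans[OF _ vlo[rule_format, OF \<open>0<n\<close>]] \<open>j' = Suc n\<close> \<open>j\<le>n\<close> unfolding f'_def by simp
          qed
        qed
      qed
      have C: "\<forall>j\<in>P. j \<le> Suc n \<longrightarrow> f' j = g j" using f3 False unfolding f'_def by (auto simp: le_Suc_eq)
      have D: "room lt X (Some (f' (Suc n))) None (r - Suc n)"
      proof -
        have "room lt X (Some (g q0)) None r" using good_above[OF gd] gY q0 by blast
        then have "room lt X (Some v) None r" using room_lo[OF lin vhi] by blast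
        then show ?thesis using room_mono[of lt X "Some v" None r "r - Suc n"] unfolding f'_def by simp
      qed
      have E: "room lt X (Some (f' (Suc n))) (Some (g q)) (q - Suc n - 1) \<and> lt (f' (Suc n)) (g q)"
        if "q\<in>P" "Suc n < q" "\<forall>q'\<in>P. Suc n<q' \<longrightarrow> q \<le> q'" for q
      proof -
        have "q = q0" proof (rule le_antisym)
          show "q \<le> q0" using that(3) q0 \<open>Suc n < q0\<close> by blast
          show "q0 \<le> q" using q0l that(1,2) by simp
        qed
        then show ?thesis using v vhi unfolding f'_def by auto
      qed
      have D': "room lt X (if Suc n = 0 then None else Some (f' (Suc n))) None (r - Suc n)" using D by simp
      have E': "\<forall>q\<in>P. Suc n<q \<longrightarrow> (\<forall>q'\<in>P. Suc n<q' \<longrightarrow> q \<le> q') \<longrightarrow>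
          room lt X (if Suc n = 0 then None else Some (f' (Suc n))) (Some (g q)) (q-Suc n-1) \<and> (0<Suc n \<longrightarrow> lt (f' (Suc n)) (g q))"
        using E by simp
      show ?thesis using A B C D' E' by blast
    next
      case noq: False
      have "r - n = Suc (r - Suc n)" using Suc.prems by auto
      then have "room lt X ?lo None (Suc (r - Suc n))" using f4 by simp
      then obtain v where v: "v \<in> ivl lt X ?lo None" "room lt X (Some v) None (r - Suc n)"
        using pick[OF lin, of X ?lo None "r - Suc n"] by blast
      have vX: "v\<in>X" and vlo: "0<n \<longrightarrow> lt (f n) v" using v(1) unfolding ivl_def by auto
      define f' where "f' = f(Suc n := v)"
      have A: "\<forall>j\<in>{1..Suc n}. f' j \<in> X" using f1 vX unfolding f'_def by auto
      have B: "\<forall>j\<in>{1..Suc n}. \<forall>j'\<in>{1..Suc n}. j<j' \<longrightarrow> lt (f' j) (f' j')"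
      proof (intro ballI impI)
        fix j j' assume j: "j\<in>{1..Suc n}" "j'\<in>{1..Suc n}" "j<j'"
        show "lt (f' j) (f' j')"
        proof (cases "j' = Suc n")
          case False then show ?thesis using f2 j unfolding f'_def by auto
        next
          case True
          then have "0 < n" "j \<le> n" using j by auto
          show ?thesis
          proof (cases "j = n")
            case True then show ?thesis using vlo \<open>0<n\<close> \<open>j' = Suc n\<close> unfolding f'_def by auto
          next
            case False
            then have "lt (f j) (f n)" using f2 j \<open>j\<le>n\<close> \<open>0<n\<close> by auto
            then show ?thesis using trans[OF _ vlo[rule_format, OF \<open>0<n\<close>]] \<open>j' = Suc n\<close> \<open>j\<le>n\<close> unfolding f'_def by simp
          qed
        qed
      qed
      have C: "\<forall>j\<in>P. j \<le> Suc n \<longrightarrow> f' j = g j" using f3 False unfolding f'_def by (auto simp: le_Suc_eq)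
      have D': "room lt X (if Suc n = 0 then None else Some (f' (Suc n))) None (r - Suc n)" using v(2) by (simp add: f'_def)
      show ?thesis using A B C D' noq by (intro exI[of _ f']) auto
    qed
  qed
qed


lemma ext:
  assumes lin: "strict_linear lt" and gd: "good lt X Y r" and infX: "infinite X"
    and P: "P \<subseteq> {1..r}" and gY: "\<forall>j\<in>P. g j \<in> Y"
    and gmono: "\<forall>j\<in>P. \<forall>j'\<in>P. j<j' \<longrightarrow> lt (g j) (g j')"
  shows "\<exists>f. (\<forall>j\<in>{1..r}. f j \<in> X) \<and> (\<forall>j\<in>{1..r}. \<forall>j'\<in>{1..r}. j<j' \<longrightarrow> lt (f j) (f j'))
     \<and> (\<forall>j\<in>P. f j = g j)"
proof -
  obtain f where "(\<forall>j\<in>{1..r}. f j \<in> X)" "(\<forall>j\<in>{1..r}. \<forall>j'\<in>{1..r}. j<j' \<longrightarrow> lt (f j) (f j'))"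
     "(\<forall>j\<in>P. j \<le> r \<longrightarrow> f j = g j)" using ext_aux[OF assms, of r] by blast
  then show ?thesis using P by (intro exI[of _ f]) auto
qed

theorem lemma3p3:
  fixes fs :: "'f \<Rightarrow> 'm list \<Rightarrow> 'm" and rs :: "'p \<Rightarrow> 'm list \<Rightarrow> bool" and lsym :: 'p
    and sk :: "nat \<Rightarrow> ('f, 'p, 'm) fm \<Rightarrow> 'f" and Mc :: "'o::wellorder \<Rightarrow> 'm set"
    and \<sigma> :: "('f, 'p, 'm) fm" and cs :: "(nat \<times> nat) list"
    and r s :: nat and \<kappa> :: "nat \<Rightarrow> 'k rel" and \<beta> :: "nat \<Rightarrow> 'o" and X :: "nat \<Rightarrow> 'm set"
  assumes setting: "standing_setting fs rs lsym sk Mc"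
    and sentence: "fv \<sigma> = {}"
    and cs_all: "set cs = fm_cc \<sigma>"
    and cs_sorted: "sorted_wrt lex_less cs"
    and rs_pos: "1 \<le> r" "1 \<le> s"
    and cs_range: "\<forall>(i, j)\<in>set cs. 1 \<le> i \<and> i \<le> s \<and> 1 \<le> j \<and> j \<le> r"
    and kappa: "\<forall>k\<in>{1..s}. Card_order (\<kappa> k) \<and> \<not> finite (Field (\<kappa> k))"
    and beta: "\<forall>k\<in>{1..s}. \<forall>k'\<in>{1..s}. k < k' \<longrightarrow> \<beta> k < \<beta> k'"
    and X_sub: "\<forall>k\<in>{1..s}. X k \<subseteq> {a. Fidx Mc a = \<beta> k}"
    and X_card: "\<forall>k\<in>{1..s}. ordIso2 (card_of (X k)) (\<kappa> k)"
    and hyp: "\<forall>a. in_prod (\<lambda>x y. rs lsym [x, y]) r s X a \<longrightarrow>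
                 models fs rs (inst \<sigma> cs (map (\<lambda>(i, j). a i j) cs))"
  shows "\<exists>Y. (\<forall>k\<in>{1..s}. Y k \<subseteq> X k \<and> ordIso2 (card_of (Y k)) (\<kappa> k))
           \<and> (\<forall>a. in_prod (\<lambda>x y. rs lsym [x, y]) r s Y a \<longrightarrow>
                (\<forall>ls. length ls = length cs
                   \<and> sorted_wrt lex_less (zip (map fst cs) ls)
                   \<and> (\<forall>l\<in>set ls. 1 \<le> l \<and> l \<le> r)
                   \<longrightarrow> models fs rs (inst \<sigma> cs (map (\<lambda>(k, l). a k l) (zip (map fst cs) ls)))))"
proof -
  let ?lt = "\<lambda>x y. rs lsym [x, y]"
  have lin: "strict_linear ?lt" using setting by (simp add: standing_setting_def)
  have infX: "infinite (X k)" if "k \<in> {1..s}" for k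
  proof -
    have "Card_order (\<kappa> k)" "\<not> finite (Field (\<kappa> k))" using kappa that by auto
    moreover have "ordIso2 (\<kappa> k) (card_of (X k))" using X_card that ordIso_symmetric by blast
    ultimately show ?thesis using card_of_ordIso_finite_Field by blast
  qed
  have ex1: "\<forall>k\<in>{1..s}. \<exists>Yk. good ?lt (X k) Yk r \<and> ordIso2 (card_of Yk) (card_of (X k))"
    using exists_good[OF lin] infX by blast
  obtain Y where Y: "\<forall>k\<in>{1..s}. good ?lt (X k) (Y k) r \<and> ordIso2 (card_of (Y k)) (card_of (X k))"
    using bchoice[OF ex1] by blast
  have part1: "\<forall>k\<in>{1..s}. Y k \<subseteq> X k \<and> ordIso2 (card_of (Y k)) (\<kappa> k)"
  proof
    fix k assume k: "k \<in> {1..s}"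
    have "Y k \<subseteq> X k" using Y k good_sub by blast
    moreover have "ordIso2 (card_of (Y k)) (\<kappa> k)" using Y k X_card ordIso_transitive by blast
    ultimately show "Y k \<subseteq> X k \<and> ordIso2 (card_of (Y k)) (\<kappa> k)" ..
  qed
  let ?n = "length cs"
  have csl: "\<And>p q. p < q \<Longrightarrow> q < ?n \<Longrightarrow> lex_less (cs!p) (cs!q)"
    using cs_sorted by (simp add: sorted_wrt_iff_nth_less)
  have lexirr: "\<And>x. \<not> lex_less x x" unfolding lex_less_def by simp
  have dist: "distinct cs"
    unfolding distinct_conv_nth
  proof (intro allI impI)
    fix p q assume "p < ?n" "q < ?n" "p \<noteq> q"
    then show "cs!p \<noteq> cs!q" using csl lexirr by (metis linorder_neq_iff)
  qed
  have idx: "(THE p'. p' < ?n \<and> cs!p' = cs!p) = p" if "p < ?n" for p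
    using that dist by (auto intro!: the_equality simp: nth_eq_iff_index_eq)
  have part2: "models fs rs (inst \<sigma> cs (map (\<lambda>(k, l). a k l) (zip (map fst cs) ls)))"
    if aY: "in_prod ?lt r s Y a" and ls1: "length ls = length cs"
      and ls2: "sorted_wrt lex_less (zip (map fst cs) ls)" and ls3: "\<forall>l\<in>set ls. 1 \<le> l \<and> l \<le> r" for a ls
  proof -
    have zl: "\<And>p q. p < q \<Longrightarrow> q < ?n \<Longrightarrow> lex_less (fst (cs!p), ls!p) (fst (cs!q), ls!q)"
      using ls2 ls1 by (simp add: sorted_wrt_iff_nth_less)
    have lsr: "\<And>p. p < ?n \<Longrightarrow> ls!p \<in> {1..r}" using ls3 ls1 by (metis atLeastAtMost_iff nth_mem)
    have aYk: "\<And>k l. k \<in> {1..s} \<Longrightarrow> l \<in> {1..r} \<Longrightarrow> a k l \<in> Y k"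
      and aYm: "\<And>k l l'. k \<in> {1..s} \<Longrightarrow> l \<in> {1..r} \<Longrightarrow> l' \<in> {1..r} \<Longrightarrow> l < l' \<Longrightarrow> ?lt (a k l) (a k l')"
      using aY unfolding in_prod_def by blast+
    define g where "g k j = a k (ls ! (THE p. p < ?n \<and> cs!p = (k, j)))" for k j
    have gp: "g (fst (cs!p)) (snd (cs!p)) = a (fst (cs!p)) (ls!p)" if "p < ?n" for p
      using idx[OF that] unfolding g_def by simp
    have ex2: "\<forall>k\<in>{1..s}. \<exists>f. (\<forall>j\<in>{1..r}. f j \<in> X k) \<and> (\<forall>j\<in>{1..r}. \<forall>j'\<in>{1..r}. j<j' \<longrightarrow> ?lt (f j) (f j'))
       \<and> (\<forall>j\<in>{j. (k, j) \<in> set cs}. f j = g k j)"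
    proof
      fix k assume k: "k \<in> {1..s}"
      show "\<exists>f. (\<forall>j\<in>{1..r}. f j \<in> X k) \<and> (\<forall>j\<in>{1..r}. \<forall>j'\<in>{1..r}. j<j' \<longrightarrow> ?lt (f j) (f j'))
       \<and> (\<forall>j\<in>{j. (k, j) \<in> set cs}. f j = g k j)"
      proof (rule ext[OF lin])
        show "good ?lt (X k) (Y k) r" using Y k by blast
        show "infinite (X k)" using infX k .
        show "{j. (k, j) \<in> set cs} \<subseteq> {1..r}" using cs_range by auto
        show "\<forall>j\<in>{j. (k, j) \<in> set cs}. g k j \<in> Y k"
        proof
          fix j assume "j \<in> {j. (k, j) \<in> set cs}"
          then obtain p where p: "p < ?n" "cs!p = (k,j)" by (auto simp: in_set_conv_nth)
          then have "g k j = a k (ls!p)" using gp[OF p(1)] by simp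
          then show "g k j \<in> Y k" using aYk[OF k lsr[OF p(1)]] by simp
        qed
        show "\<forall>j\<in>{j. (k, j) \<in> set cs}. \<forall>j'\<in>{j. (k, j) \<in> set cs}. j < j' \<longrightarrow> ?lt (g k j) (g k j')"
        proof (intro ballI impI)
          fix j j' assume jj: "j \<in> {j. (k, j) \<in> set cs}" "j' \<in> {j. (k, j) \<in> set cs}" "j < j'"
          obtain p where p: "p < ?n" "cs!p = (k,j)" using jj(1) by (auto simp: in_set_conv_nth)
          obtain p' where p': "p' < ?n" "cs!p' = (k,j')" using jj(2) by (auto simp: in_set_conv_nth)
          have "p < p'"
          proof (rule ccontr)
            assume "\<not> p < p'"
            then have "p' < p \<or> p' = p" by auto
            then show False
            proof
              assume "p' < p" then have "lex_less (cs!p') (cs!p)" using csl p by blast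
              then show False using p p' jj(3) unfolding lex_less_def by simp
            next
              assume "p' = p" then show False using p p' jj(3) by simp
            qed
          qed
          then have "lex_less (fst (cs!p), ls!p) (fst (cs!p'), ls!p')" using zl p' by blast
          then have "ls!p < ls!p'" using p p' unfolding lex_less_def by simp
          then have "?lt (a k (ls!p)) (a k (ls!p'))" using aYm[OF k lsr[OF p(1)] lsr[OF p'(1)]] by blast
          then show "?lt (g k j) (g k j')" using gp[OF p(1)] gp[OF p'(1)] p p' by simp
        qed
      qed
    qed
    obtain F where F: "\<forall>k\<in>{1..s}. (\<forall>j\<in>{1..r}. F k j \<in> X k) \<and> (\<forall>j\<in>{1..r}. \<forall>j'\<in>{1..r}. j<j' \<longrightarrow> ?lt (F k j) (F k j'))
       \<and> (\<forall>j\<in>{j. (k, j) \<in> set cs}. F k j = g k j)" using bchoice[OF ex2] by blast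
    have "in_prod ?lt r s X F" unfolding in_prod_def using F by blast
    then have M: "models fs rs (inst \<sigma> cs (map (\<lambda>(i, j). F i j) cs))" using hyp by blast
    have "map (\<lambda>(i, j). F i j) cs = map (\<lambda>(k, l). a k l) (zip (map fst cs) ls)"
    proof (rule nth_equalityI)
      show "length (map (\<lambda>(i, j). F i j) cs) = length (map (\<lambda>(k, l). a k l) (zip (map fst cs) ls))"
        using ls1 by simp
      fix p assume "p < length (map (\<lambda>(i, j). F i j) cs)"
      then have p: "p < ?n" by simp
      obtain k j where kj: "cs!p = (k,j)" by fastforce
      have mem: "(k,j) \<in> set cs" using p kj by (metis nth_mem)
      then have k: "k \<in> {1..s}" using cs_range by auto
      have "F k j = g k j" using F k mem by blast
      also have "\<dots> = a k (ls!p)" using gp[OF p] kj by simp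
      finally show "map (\<lambda>(i, j). F i j) cs ! p = map (\<lambda>(k, l). a k l) (zip (map fst cs) ls) ! p"
        using p kj ls1 by simp
    qed
    then show ?thesis using M by simp
  qed
  show ?thesis using part1 part2 by blast
qed

end
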